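(* Let $n\ge 4$ and let $T$ be a vertex of the Whitehouse complex $\Delta_n$. Then $\mathrm{link}_{\Delta_n}(\{T\})\cong \Delta_{|T|+1} * \Delta_{n-|T|+1}$ as simplicial complexes.
   Context: The Whitehouse complex $\Delta_n$ ($n\ge 3$) is the simplicial complex with vertex set $V_n=\{S\subseteq\{2,\dots,n\}: 2\le |S|\le n-2\}$, in which a subset $F\subseteq V_n$ is a face iff for all $S,T\in F$ one has $S\subseteq T$, $T\subseteq S$, or $S\cap T=\emptyset$. (So $\Delta_3=\{\emptyset\}$.) The link of a face $F$ in $\Delta$ is $\{G: F\cap G=\emptyset, F\cup G\in\Delta\}$. For complexes $\Delta,\Gamma$ on disjoint vertex sets, the join is $\Delta*\Gamma=\{F\cup G: F\in\Delta, G\in\Gamma\}$ (taking disjoint copies of vertex sets when needed). *)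

theory Defs
  imports Main
begin

text \<open>Simplicial complexes are represented by their set of faces (a set of finite sets).\<close>

definition wh_vertices :: "nat \<Rightarrow> nat set set" where
  "wh_vertices n = {S. S \<subseteq> {2..n} \<and> 2 \<le> card S \<and> card S \<le> n - 2}"

definition whitehouse :: "nat \<Rightarrow> nat set set set" where
  "whitehouse n = {F. F \<subseteq> wh_vertices n \<and>
      (\<forall>S\<in>F. \<forall>T\<in>F. S \<subseteq> T \<or> T \<subseteq> S \<or> S \<inter> T = {})}"

definition link :: "'a set set \<Rightarrow> 'a set \<Rightarrow> 'a set set" where
  "link \<Delta> F = {G. F \<inter> G = {} \<and> F \<union> G \<in> \<Delta>}"

definition join :: "'a set set \<Rightarrow> 'b set set \<Rightarrow> ('a + 'b) set set" where
  "join \<Delta> \<Gamma> = {Inl ` F \<union> Inr ` G | F G. F \<in> \<Delta> \<and> G \<in> \<Gamma>}"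

definition simplicial_iso :: "'a set set \<Rightarrow> 'b set set \<Rightarrow> bool" where
  "simplicial_iso \<Delta> \<Gamma> \<longleftrightarrow> (\<exists>f. inj_on f (\<Union>\<Delta>) \<and> (\<lambda>F. f ` F) ` \<Delta> = \<Gamma>)"

end

theory Submission
  imports Defs
begin

definition compat :: "'a set \<Rightarrow> 'a set \<Rightarrow> bool" where
  "compat S T \<longleftrightarrow> S \<subseteq> T \<or> T \<subseteq> S \<or> S \<inter> T = {}"

definition laminar :: "'a set set \<Rightarrow> bool" where
  "laminar F \<longleftrightarrow> (\<forall>S\<in>F. \<forall>T\<in>F. compat S T)"

definition verts :: "'a set \<Rightarrow> nat \<Rightarrow> nat \<Rightarrow> 'a set set" where
  "verts X a b = {S. S \<subseteq> X \<and> a \<le> card S \<and> card S \<le> b}"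

lemma whitehouse_alt: "whitehouse n = {F. F \<subseteq> verts {2..n} 2 (n-2) \<and> laminar F}"
  unfolding whitehouse_def wh_vertices_def verts_def laminar_def compat_def by auto

lemma lam_transfer:
  assumes b: "bij_betw h V W"
    and c: "\<And>x y. x\<in>V \<Longrightarrow> y\<in>V \<Longrightarrow> compat (h x) (h y) = compat x y"
  shows "(\<lambda>F. h ` F) ` {F. F \<subseteq> V \<and> laminar F} = {F. F \<subseteq> W \<and> laminar F}"
proof (intro equalityI subsetI)
  fix G assume "G \<in> (\<lambda>F. h ` F) ` {F. F \<subseteq> V \<and> laminar F}"
  then obtain F where F: "F \<subseteq> V" "laminar F" "G = h ` F" by auto
  have "G \<subseteq> W" using F b bij_betw_imp_surj_on by blast
  moreover have "laminar G" unfolding laminar_def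
  proof (intro ballI)
    fix u v assume "u \<in> G" "v \<in> G"
    then obtain x y where "x \<in> F" "y \<in> F" "u = h x" "v = h y" using F by auto
    moreover have "x \<in> V" "y \<in> V" using F \<open>x \<in> F\<close> \<open>y \<in> F\<close> by auto
    moreover have "compat x y" using F(2) \<open>x \<in> F\<close> \<open>y \<in> F\<close> unfolding laminar_def by auto
    ultimately show "compat u v" using c by simp
  qed
  ultimately show "G \<in> {F. F \<subseteq> W \<and> laminar F}" by simp
next
  fix G assume G: "G \<in> {F. F \<subseteq> W \<and> laminar F}"
  define F where "F = inv_into V h ` G"
  have hF: "h ` F = G" unfolding F_def using G b
    by (simp add: bij_betw_def image_inv_into_cancel)
  have FV: "F \<subseteq> V" unfolding F_def using G b
    by (auto intro!: inv_into_into simp: bij_betw_def)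
  have "laminar F" unfolding laminar_def
  proof (intro ballI)
    fix x y assume "x \<in> F" "y \<in> F"
    then have "h x \<in> G" "h y \<in> G" using hF by auto
    then have "compat (h x) (h y)" using G unfolding laminar_def by auto
    then show "compat x y" using c FV \<open>x \<in> F\<close> \<open>y \<in> F\<close> by blast
  qed
  then show "G \<in> (\<lambda>F. h ` F) ` {F. F \<subseteq> V \<and> laminar F}" using hF FV by blast
qed

lemma image_verts:
  assumes b: "bij_betw \<alpha> X Y" and fin: "finite X"
  shows "bij_betw (image \<alpha>) (verts X a b) (verts Y a b)"
    and "\<And>x y. x \<in> verts X a b \<Longrightarrow> y \<in> verts X a b \<Longrightarrow> compat (\<alpha> ` x) (\<alpha> ` y) = compat x y"
proof -
  have inj: "inj_on \<alpha> X" using b bij_betw_def by blast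
  have cardeq: "card (\<alpha> ` S) = card S" if "S \<subseteq> X" for S
    using inj that by (meson card_image inj_on_subset)
  have P: "bij_betw (image \<alpha>) (Pow X) (Pow Y)" using b bij_betw_Pow by blast
  have "verts X a b = {S \<in> Pow X. a \<le> card S \<and> card S \<le> b}" unfolding verts_def by auto
  moreover have "verts Y a b = image \<alpha> ` {S \<in> Pow X. a \<le> card S \<and> card S \<le> b}"
  proof -
    have "verts Y a b = {U \<in> image \<alpha> ` Pow X. a \<le> card U \<and> card U \<le> b}"
      using P unfolding verts_def bij_betw_def by auto
    also have "\<dots> = image \<alpha> ` {S \<in> Pow X. a \<le> card S \<and> card S \<le> b}"
      using cardeq by auto
    finally show ?thesis .
  qed
  ultimately show "bij_betw (image \<alpha>) (verts X a b) (verts Y a b)"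
    unfolding bij_betw_def
  proof (intro conjI)
    have "inj_on ((`) \<alpha>) (Pow X)" using P unfolding bij_betw_def by blast
    then show "inj_on ((`) \<alpha>) (verts X a b)" 
      by (rule inj_on_subset) (auto simp: verts_def)
  qed (simp add: \<open>verts X a b = _\<close>)
  fix x y assume "x \<in> verts X a b" "y \<in> verts X a b"
  then have xy: "x \<subseteq> X" "y \<subseteq> X" unfolding verts_def by auto
  have sub: "\<alpha> ` x \<subseteq> \<alpha> ` y \<longleftrightarrow> x \<subseteq> y" if xy: "x \<subseteq> X" "y \<subseteq> X" for x y
  proof -
    have "\<alpha> ` x \<subseteq> \<alpha> ` y \<longleftrightarrow> \<alpha> ` (x \<inter> y) = \<alpha> ` x" using inj_on_image_Int[OF inj xy] by blast
    also have "\<dots> \<longleftrightarrow> x \<inter> y = x" by (rule inj_on_image_eq_iff[OF inj]) (use xy in auto)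
    also have "\<dots> \<longleftrightarrow> x \<subseteq> y" by blast
    finally show ?thesis .
  qed
  have "\<alpha> ` x \<subseteq> \<alpha> ` y \<longleftrightarrow> x \<subseteq> y" using sub xy by blast
  moreover have "\<alpha> ` y \<subseteq> \<alpha> ` x \<longleftrightarrow> y \<subseteq> x" using sub xy by blast
  moreover have "\<alpha> ` x \<inter> \<alpha> ` y = {} \<longleftrightarrow> x \<inter> y = {}" using inj xy
    by (metis image_is_empty inj_on_image_Int[OF inj xy])
  ultimately show "compat (\<alpha> ` x) (\<alpha> ` y) = compat x y" unfolding compat_def by blast
qed

lemma laminar_subset: "laminar G \<Longrightarrow> H \<subseteq> G \<Longrightarrow> laminar H"
  unfolding laminar_def by blast

lemma compat_sym: "compat S T = compat T S"
  unfolding compat_def by blast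

lemma laminar_insert: "laminar (insert T G) \<longleftrightarrow> laminar G \<and> (\<forall>S\<in>G. compat S T)"
  unfolding laminar_def compat_def by blast

lemma laminar_split:
  assumes "\<And>x y. x \<in> A \<Longrightarrow> y \<in> B \<Longrightarrow> compat x y" "G \<subseteq> A \<union> B"
  shows "laminar G \<longleftrightarrow> laminar (G \<inter> A) \<and> laminar (G \<inter> B)"
proof
  assume L: "laminar (G \<inter> A) \<and> laminar (G \<inter> B)"
  show "laminar G" unfolding laminar_def
  proof (intro ballI)
    fix x y assume "x \<in> G" "y \<in> G"
    then consider "x \<in> A" "y \<in> A" | "x \<in> A" "y \<in> B" | "x \<in> B" "y \<in> A" | "x \<in> B" "y \<in> B"
      using assms(2) by blast
    then show "compat x y"
    proof cases
      case 1 then show ?thesis using L \<open>x \<in> G\<close> \<open>y \<in> G\<close> unfolding laminar_def by blast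
    next
      case 2 then show ?thesis using assms(1) by blast
    next
      case 3 then show ?thesis using assms(1) compat_sym by metis
    next
      case 4 then show ?thesis using L \<open>x \<in> G\<close> \<open>y \<in> G\<close> unfolding laminar_def by blast
    qed
  qed
qed (auto intro: laminar_subset)

lemma phi_compat:
  assumes "t0 \<in> T" "T \<subseteq> x \<or> x \<inter> T = {}" "T \<subseteq> y \<or> y \<inter> T = {}"
  shows "compat (if x \<inter> T = {} then x else insert t0 (x - T)) (if y \<inter> T = {} then y else insert t0 (y - T))
       = compat x y"
proof (cases "x \<inter> T = {}"; cases "y \<inter> T = {}")
  assume "x \<inter> T = {}" "y \<inter> T = {}" then show ?thesis by simp
next
  assume a: "x \<inter> T = {}" "y \<inter> T \<noteq> {}"
  then have "T \<subseteq> y" using assms by blast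
  then show ?thesis using a assms(1) unfolding compat_def by auto
next
  assume a: "x \<inter> T \<noteq> {}" "y \<inter> T = {}"
  then have "T \<subseteq> x" using assms by blast
  then show ?thesis using a assms(1) unfolding compat_def by auto
next
  assume a: "x \<inter> T \<noteq> {}" "y \<inter> T \<noteq> {}"
  then have "T \<subseteq> x" "T \<subseteq> y" using assms by blast+
  then show ?thesis using a assms(1) unfolding compat_def by auto
qed

theorem mainTheorem2:
  fixes n :: nat and T :: "nat set"
  assumes "n \<ge> 4" and "T \<in> wh_vertices n"
  shows "simplicial_iso (link (whitehouse n) {T})
           (join (whitehouse (card T + 1)) (whitehouse (n - card T + 1)))"
proof -
  define k where "k = card T"
  have Tsub: "T \<subseteq> {2..n}" and k2: "2 \<le> k" and kn: "k \<le> n - 2"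
    using assms(2) unfolding wh_vertices_def k_def by auto
  have finT: "finite T" using Tsub finite_subset by blast
  have "T \<noteq> {}" using k2 k_def by auto
  then obtain t0 where t0: "t0 \<in> T" by blast
  have TV: "T \<in> verts {2..n} 2 (n-2)" using assms(2) unfolding wh_vertices_def verts_def by simp
  define C where "C = {2..n} - T"
  define G2 where "G2 = insert t0 C"
  have cardC: "card C = n - 1 - k" unfolding C_def k_def using Tsub
    by (simp add: card_Diff_subset finT)
  have cardG2: "card G2 = n - k" unfolding G2_def using cardC t0 kn C_def assms(1)
    by (simp add: finite_subset)
  define A where "A = verts T 2 (k-1)"
  define B where "B = {S \<in> verts {2..n} 2 (n-2). \<not> S \<subseteq> T \<and> compat S T}"
  define V2 where "V2 = verts G2 2 (n-k-1)"
  define \<phi> where "\<phi> = (\<lambda>S::nat set. if S \<inter> T = {} then S else insert t0 (S - T))"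
  define \<psi> where "\<psi> = (\<lambda>U::nat set. if t0 \<in> U then T \<union> (U - {t0}) else U)"
  have Bshape: "T \<subseteq> S \<or> S \<inter> T = {}" if "S \<in> B" for S
    using that unfolding B_def compat_def by blast
  have phi_bij: "bij_betw \<phi> B V2"
  proof (rule bij_betw_byWitness[where f'=\<psi>])
    show "\<forall>a\<in>B. \<psi> (\<phi> a) = a"
    proof
      fix a assume "a \<in> B"
      then consider "T \<subseteq> a" "a \<inter> T \<noteq> {}" | "a \<inter> T = {}" using Bshape t0 by blast
      then show "\<psi> (\<phi> a) = a"
      proof cases
        case 1 then show ?thesis unfolding \<phi>_def \<psi>_def using t0 by auto
      next
        case 2
        then have "t0 \<notin> a" using t0 by blast
        then show ?thesis unfolding \<phi>_def \<psi>_def using 2 by auto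
      qed
    qed
    show "\<forall>a'\<in>V2. \<phi> (\<psi> a') = a'"
    proof
      fix b assume "b \<in> V2"
      then have bG: "b \<subseteq> insert t0 C" unfolding V2_def verts_def G2_def by auto
      have CT: "C \<inter> T = {}" unfolding C_def by blast
      show "\<phi> (\<psi> b) = b"
      proof (cases "t0 \<in> b")
        case True
        then have "\<psi> b = T \<union> (b - {t0})" unfolding \<psi>_def by simp
        moreover have "(T \<union> (b - {t0})) \<inter> T \<noteq> {}" using t0 by blast
        moreover have "insert t0 ((T \<union> (b - {t0})) - T) = b" using True bG CT by blast
        ultimately show ?thesis unfolding \<phi>_def by simp
      next
        case False
        then have "b \<inter> T = {}" using bG CT by blast
        then show ?thesis unfolding \<phi>_def \<psi>_def using False by simp
      qed
    qed
    show "\<phi> ` B \<subseteq> V2"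
    proof
      fix x assume "x \<in> \<phi> ` B"
      then obtain a where a: "a \<in> B" "x = \<phi> a" by blast
      have aV: "a \<subseteq> {2..n}" "2 \<le> card a" "card a \<le> n - 2" "\<not> a \<subseteq> T"
        using a(1) unfolding B_def verts_def by auto
      have fina: "finite a" using aV(1) finite_subset by blast
      consider "T \<subseteq> a" "a \<inter> T \<noteq> {}" | "a \<inter> T = {}" using Bshape[OF a(1)] t0 by blast
      then show "x \<in> V2"
      proof cases
        case 1
        then have x: "x = insert t0 (a - T)" using a unfolding \<phi>_def by simp
        have "T \<subset> a" using 1 aV by blast
        then have "card T < card a" using fina psubset_card_mono by blast
        have ca: "card (a - T) = card a - k" using 1 fina k_def card_Diff_subset finT by metis
        have "card x = card a - k + 1" unfolding x using ca fina t0 by simp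
        moreover have "x \<subseteq> G2" unfolding x G2_def C_def using aV by blast
        ultimately show ?thesis unfolding V2_def verts_def
          using \<open>card T < card a\<close> k_def aV kn assms(1) by auto
      next
        case 2
        then have x: "x = a" using a unfolding \<phi>_def by simp
        have "a \<subseteq> C" unfolding C_def using 2 aV by blast
        then have "card a \<le> card C" using card_mono C_def by (metis finite_Diff finite_atLeastAtMost)
        moreover have "x \<subseteq> G2" unfolding x G2_def using \<open>a \<subseteq> C\<close> by blast
        ultimately show ?thesis unfolding V2_def verts_def using x aV cardC by simp
      qed
    qed
    show "\<psi> ` V2 \<subseteq> B"
    proof
      fix x assume "x \<in> \<psi> ` V2"
      then obtain b where b: "b \<in> V2" "x = \<psi> b" by blast
      have bV: "b \<subseteq> insert t0 C" "2 \<le> card b" "card b \<le> n - k - 1"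
        using b(1) unfolding V2_def verts_def G2_def by auto
      have finb: "finite b" by (rule finite_subset[OF bV(1)]) (simp add: C_def)
      have CT: "C \<inter> T = {}" unfolding C_def by blast
      show "x \<in> B"
      proof (cases "t0 \<in> b")
        case True
        then have x: "x = T \<union> (b - {t0})" using b unfolding \<psi>_def by simp
        have d: "T \<inter> (b - {t0}) = {}" using bV(1) CT by blast
        have cb: "card (b - {t0}) = card b - 1" using True finb by simp
        have "card x = k + (card b - 1)" unfolding x k_def
          using card_Un_disjoint[OF finT _ d] finb cb by simp
        moreover have "x \<subseteq> {2..n}" unfolding x using Tsub bV(1) C_def by blast
        moreover have "card (b - {t0}) \<noteq> 0" using cb bV(2) by simp
        then have "b - {t0} \<noteq> {}" by (metis card.empty)
        then have "\<not> x \<subseteq> T" unfolding x using d by blast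
        moreover have "compat x T" unfolding x compat_def by blast
        ultimately show ?thesis unfolding B_def verts_def using k2 kn bV assms(1) by (simp, arith)
      next
        case False
        then have x: "x = b" using b unfolding \<psi>_def by simp
        have "b \<subseteq> C" using False bV(1) by blast
        then have "b \<inter> T = {}" "x \<subseteq> {2..n}" using CT x C_def by blast+
        moreover have "b \<noteq> {}" using bV(2) by auto
        ultimately show ?thesis unfolding B_def verts_def compat_def using x bV k2 by auto
      qed
    qed
  qed
  have phi_c: "compat (\<phi> x) (\<phi> y) = compat x y" if "x \<in> B" "y \<in> B" for x y
    unfolding \<phi>_def using phi_compat[OF t0 Bshape[OF that(1)] Bshape[OF that(2)]] .
  have c1: "card T = card {2..k+1}" using k_def by simp
  obtain \<alpha> where \<alpha>: "bij_betw \<alpha> T {2..k+1}"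
    using finite_same_card_bij[OF finT _ c1] by blast
  have finG2: "finite G2" unfolding G2_def C_def by simp
  have c2: "card G2 = card {2..n-k+1}" using cardG2 by simp
  obtain \<beta> where \<beta>: "bij_betw \<beta> G2 {2..n-k+1}"
    using finite_same_card_bij[OF finG2 _ c2] by blast
  define hB where "hB = (\<lambda>S. \<beta> ` (\<phi> S))"
  have hB_bij: "bij_betw hB B (verts {2..n-k+1} 2 (n-k-1))"
    unfolding hB_def using bij_betw_trans[OF phi_bij[unfolded V2_def] image_verts(1)[OF \<beta> finG2]]
    unfolding comp_def .
  have hB_c: "compat (hB x) (hB y) = compat x y" if "x \<in> B" "y \<in> B" for x y
  proof -
    have "\<phi> x \<in> V2" "\<phi> y \<in> V2" using bij_betw_apply[OF phi_bij] that by auto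
    then have "compat (\<beta> ` \<phi> x) (\<beta> ` \<phi> y) = compat (\<phi> x) (\<phi> y)"
      unfolding V2_def by (rule image_verts(2)[OF \<beta> finG2])
    then show ?thesis unfolding hB_def using phi_c[OF that] by simp
  qed
  have hA_bij: "bij_betw (image \<alpha>) A (verts {2..k+1} 2 (k-1))"
    unfolding A_def using image_verts(1)[OF \<alpha> finT] .
  have hA_c: "compat (\<alpha> ` x) (\<alpha> ` y) = compat x y" if "x \<in> A" "y \<in> A" for x y
    using that unfolding A_def by (rule image_verts(2)[OF \<alpha> finT])
  have W1: "(\<lambda>F. image \<alpha> ` F) ` {F. F \<subseteq> A \<and> laminar F} = whitehouse (card T + 1)"
    unfolding whitehouse_alt using lam_transfer[OF hA_bij hA_c] k_def by simp
  have W2: "(\<lambda>F. hB ` F) ` {F. F \<subseteq> B \<and> laminar F} = whitehouse (n - card T + 1)"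
  proof -
    have "n - card T + 1 - 2 = n - k - 1" using k_def kn by simp
    then show ?thesis
      unfolding whitehouse_alt using lam_transfer[OF hB_bij hB_c] k_def by simp
  qed
  have AB: "A \<inter> B = {}" unfolding A_def B_def verts_def by blast
  have cross: "compat x y" if "x \<in> A" "y \<in> B" for x y
    using Bshape[OF that(2)] that(1) unfolding A_def verts_def compat_def by blast
  have vchar: "S \<in> A \<union> B \<longleftrightarrow> S \<in> verts {2..n} 2 (n-2) \<and> S \<noteq> T \<and> compat S T" for S
  proof
    assume "S \<in> A \<union> B"
    then show "S \<in> verts {2..n} 2 (n-2) \<and> S \<noteq> T \<and> compat S T"
    proof
      assume SA: "S \<in> A"
      then have "S \<subseteq> T" "2 \<le> card S" "card S \<le> k - 1" unfolding A_def verts_def by auto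
      then show ?thesis using Tsub k2 kn k_def unfolding verts_def compat_def by auto
    next
      assume "S \<in> B" then show ?thesis unfolding B_def by auto
    qed
  next
    assume S: "S \<in> verts {2..n} 2 (n-2) \<and> S \<noteq> T \<and> compat S T"
    show "S \<in> A \<union> B"
    proof (cases "S \<subseteq> T")
      case True
      then have "S \<subset> T" using S by blast
      then have "card S < k" unfolding k_def using finT psubset_card_mono by blast
      then show ?thesis using True S unfolding A_def verts_def by auto
    next
      case False then show ?thesis using S unfolding B_def by auto
    qed
  qed
  have Lk: "link (whitehouse n) {T} = {G. G \<subseteq> A \<union> B \<and> laminar G}"
  proof -
    have e1: "G \<in> link (whitehouse n) {T} \<longleftrightarrow> T \<notin> G \<and> G \<subseteq> verts {2..n} 2 (n-2) \<and> laminar G \<and> (\<forall>S\<in>G. compat S T)" for G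
    proof -
      have "G \<in> link (whitehouse n) {T} \<longleftrightarrow> T \<notin> G \<and> insert T G \<in> whitehouse n"
        unfolding link_def by auto
      also have "\<dots> \<longleftrightarrow> T \<notin> G \<and> insert T G \<subseteq> verts {2..n} 2 (n-2) \<and> laminar (insert T G)"
        unfolding whitehouse_alt by blast
      also have "\<dots> \<longleftrightarrow> T \<notin> G \<and> G \<subseteq> verts {2..n} 2 (n-2) \<and> laminar G \<and> (\<forall>S\<in>G. compat S T)"
        unfolding laminar_insert using TV by blast
      finally show ?thesis .
    qed
    have e2: "(T \<notin> G \<and> G \<subseteq> verts {2..n} 2 (n-2) \<and> (\<forall>S\<in>G. compat S T)) \<longleftrightarrow> G \<subseteq> A \<union> B" for G
      using vchar by blast
    show ?thesis
    proof (rule set_eqI)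
      fix G show "G \<in> link (whitehouse n) {T} \<longleftrightarrow> G \<in> {G. G \<subseteq> A \<union> B \<and> laminar G}"
        unfolding e1 mem_Collect_eq e2[of G, symmetric] by blast
    qed
  qed
  define f where "f = (\<lambda>S. if S \<subseteq> T then Inl (\<alpha> ` S) else Inr (hB S))"
  have fA: "f S = Inl (\<alpha> ` S)" if "S \<in> A" for S using that unfolding f_def A_def verts_def by auto
  have fB: "f S = Inr (hB S)" if "S \<in> B" for S using that unfolding f_def B_def by auto
  have Un: "\<Union> (link (whitehouse n) {T}) = A \<union> B"
  proof
    show "\<Union> (link (whitehouse n) {T}) \<subseteq> A \<union> B" unfolding Lk by blast
    show "A \<union> B \<subseteq> \<Union> (link (whitehouse n) {T})"
    proof
      fix v assume "v \<in> A \<union> B"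
      moreover have "laminar {v}" unfolding laminar_def compat_def by blast
      ultimately have "{v} \<in> link (whitehouse n) {T}" unfolding Lk by blast
      then show "v \<in> \<Union> (link (whitehouse n) {T})" by blast
    qed
  qed
  have injA: "inj_on (image \<alpha>) A" using hA_bij bij_betw_def by blast
  have injB: "inj_on hB B" using hB_bij bij_betw_def by blast
  have inj: "inj_on f (A \<union> B)"
  proof (rule inj_onI)
    fix x y assume xy: "x \<in> A \<union> B" "y \<in> A \<union> B" "f x = f y"
    show "x = y"
    proof (cases "x \<in> A")
      case True
      show ?thesis
      proof (cases "y \<in> A")
        case True
        have "\<alpha> ` x = \<alpha> ` y" using fA[OF \<open>x \<in> A\<close>] fA[OF True] xy(3) by simp
        then show ?thesis using inj_onD[OF injA _ \<open>x \<in> A\<close> True] by blast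
      next
        case False
        then have "y \<in> B" using xy by blast
        then show ?thesis using \<open>x \<in> A\<close> xy fA fB by simp
      qed
    next
      case False
      then have "x \<in> B" using xy by blast
      show ?thesis
      proof (cases "y \<in> A")
        case True
        then show ?thesis using \<open>x \<in> B\<close> xy fA fB by simp
      next
        case False
        then have "y \<in> B" using xy by blast
        have "hB x = hB y" using fB[OF \<open>x \<in> B\<close>] fB[OF \<open>y \<in> B\<close>] xy(3) by simp
        then show ?thesis using inj_onD[OF injB _ \<open>x \<in> B\<close> \<open>y \<in> B\<close>] by blast
      qed
    qed
  qed
  have fG: "f ` G = Inl ` (image \<alpha> ` (G \<inter> A)) \<union> Inr ` (hB ` (G \<inter> B))" if "G \<subseteq> A \<union> B" for G
  proof -
    have "G = (G \<inter> A) \<union> (G \<inter> B)" using that by blast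
    then have "f ` G = f ` (G \<inter> A) \<union> f ` (G \<inter> B)" by (metis image_Un)
    moreover have "f ` (G \<inter> A) = Inl ` (image \<alpha> ` (G \<inter> A))"
      unfolding image_image by (rule image_cong) (auto simp: fA)
    moreover have "f ` (G \<inter> B) = Inr ` (hB ` (G \<inter> B))"
      unfolding image_image by (rule image_cong) (auto simp: fB)
    ultimately show ?thesis by simp
  qed
  have img: "(\<lambda>F. f ` F) ` {G. G \<subseteq> A \<union> B \<and> laminar G} =
     join ((\<lambda>F. image \<alpha> ` F) ` {F. F \<subseteq> A \<and> laminar F}) ((\<lambda>F. hB ` F) ` {F. F \<subseteq> B \<and> laminar F})"
  proof (intro equalityI subsetI)
    fix x assume "x \<in> (\<lambda>F. f ` F) ` {G. G \<subseteq> A \<union> B \<and> laminar G}"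
    then obtain G where G: "G \<subseteq> A \<union> B" "laminar G" "x = f ` G" by blast
    have "G \<inter> A \<in> {F. F \<subseteq> A \<and> laminar F}" using G laminar_subset by blast
    moreover have "G \<inter> B \<in> {F. F \<subseteq> B \<and> laminar F}" using G laminar_subset by blast
    ultimately show "x \<in> join ((\<lambda>F. image \<alpha> ` F) ` {F. F \<subseteq> A \<and> laminar F}) ((\<lambda>F. hB ` F) ` {F. F \<subseteq> B \<and> laminar F})"
      unfolding join_def using fG[OF G(1)] G(3) by blast
  next
    fix x assume "x \<in> join ((\<lambda>F. image \<alpha> ` F) ` {F. F \<subseteq> A \<and> laminar F}) ((\<lambda>F. hB ` F) ` {F. F \<subseteq> B \<and> laminar F})"
    then obtain G1 G2 where G: "G1 \<subseteq> A" "laminar G1" "G2 \<subseteq> B" "laminar G2"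
      "x = Inl ` (image \<alpha> ` G1) \<union> Inr ` (hB ` G2)" unfolding join_def by blast
    define G where "G = G1 \<union> G2"
    have GAB: "G \<subseteq> A \<union> B" using G unfolding G_def by blast
    have GA: "G \<inter> A = G1" using G AB unfolding G_def by blast
    have GB: "G \<inter> B = G2" using G AB unfolding G_def by blast
    have "laminar G" using laminar_split[OF cross GAB] GA GB G by simp
    moreover have "x = f ` G" using fG[OF GAB] GA GB G by simp
    ultimately show "x \<in> (\<lambda>F. f ` F) ` {G. G \<subseteq> A \<union> B \<and> laminar G}" using GAB by blast
  qed
  show ?thesis unfolding simplicial_iso_def
  proof (intro exI conjI)
    show "inj_on f (\<Union> (link (whitehouse n) {T}))" using inj Un by simp
    show "(\<lambda>F. f ` F) ` link (whitehouse n) {T} = join (whitehouse (card T + 1)) (whitehouse (n - card T + 1))"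
      using img Lk W1 W2 by simp
  qed
qed

end
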